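(* Let $k\ge 3$. For $i=1,2$ let $m_i\ge 2$ and $r_i\ge 1$ be integers and suppose $\mathcal{C}_i$ is a coloring of $\mathbb{Z}_{m_i}\setminus\{0\}$ with $r_i$ colors such that, for every choice of one of the $r_i$ colors for $0$, the resulting coloring of $\mathbb{Z}_{m_i}$ contains no nontrivial monochromatic $k$-AP. Then there is a coloring of $\mathbb{Z}_{m_1m_2}\setminus\{0\}$ with $r_1r_2$ colors such that, for every choice of one of the $r_1r_2$ colors for $0$, the resulting coloring of $\mathbb{Z}_{m_1m_2}$ contains no nontrivial monochromatic $k$-AP.
   Context: A $k$-AP in $\mathbb{Z}_m$ is a sequence $a,a+d,\ldots,a+(k-1)d$ with $a,d\in\mathbb{Z}_m$; it is trivial if $d\equiv 0\pmod m$ (equivalently all terms are equal) and nontrivial otherwise. A progression is monochromatic if all its terms receive the same color. *)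

theory Defs
  imports Main
begin

text \<open>Z_m is represented by the residues {0..<m} with arithmetic mod m.\<close>

definition has_nontrivial_mono_AP :: "nat \<Rightarrow> nat \<Rightarrow> (nat \<Rightarrow> nat) \<Rightarrow> bool" where
  "has_nontrivial_mono_AP k m c \<longleftrightarrow>
     (\<exists>a<m. \<exists>d<m. d \<noteq> 0 \<and> (\<forall>i<k. c ((a + i * d) mod m) = c a))"

definition good_coloring :: "nat \<Rightarrow> nat \<Rightarrow> nat \<Rightarrow> (nat \<Rightarrow> nat) \<Rightarrow> bool" where
  "good_coloring k m r c \<longleftrightarrow>
     (\<forall>x\<in>{1..<m}. c x < r) \<and>
     (\<forall>j<r. \<not> has_nontrivial_mono_AP k m (c(0 := j)))"

end

theory Submission
  imports Defs
begin

lemma mod_prod_split: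
  fixes x m1 m2 :: nat
  assumes "m2 > 0"
  shows "x mod (m1*m2) div m2 = x div m2 mod m1 \<and> x mod (m1*m2) mod m2 = x mod m2"
proof -
  have e: "x mod (m2*m1) = m2 * (x div m2 mod m1) + x mod m2" by (rule mod_mult2_eq)
  have "x mod (m1*m2) = m2 * (x div m2 mod m1) + x mod m2" using e by (simp add: mult.commute)
  then show ?thesis using assms by simp
qed

theorem mainTheorem4:
  fixes k m1 m2 r1 r2 :: nat and c1 c2 :: "nat \<Rightarrow> nat"
  assumes "k \<ge> 3"
    and "m1 \<ge> 2" and "m2 \<ge> 2" and "r1 \<ge> 1" and "r2 \<ge> 1"
    and "good_coloring k m1 r1 c1" and "good_coloring k m2 r2 c2"
  shows "\<exists>c. good_coloring k (m1 * m2) (r1 * r2) c"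
proof -
  define f1 where "f1 z = (if z = 0 then 0 else c1 z)" for z
  define f2 where "f2 z = (if z = 0 then 0 else c2 z)" for z
  define c where "c x = f1 (x div m2) * r2 + f2 (x mod m2)" for x
  define M where "M = m1 * m2"
  have g1: "\<forall>x\<in>{1..<m1}. c1 x < r1" and n1: "\<forall>j<r1. \<not> has_nontrivial_mono_AP k m1 (c1(0 := j))"
    using assms(6) unfolding good_coloring_def by auto
  have g2: "\<forall>x\<in>{1..<m2}. c2 x < r2" and n2: "\<forall>j<r2. \<not> has_nontrivial_mono_AP k m2 (c2(0 := j))"
    using assms(7) unfolding good_coloring_def by auto
  have m2p: "m2 > 0" using assms by simp
  have f2b: "f2 (x mod m2) < r2" for x
    using g2 m2p assms(5) unfolding f2_def by auto
  have f1b: "x < M \<Longrightarrow> f1 (x div m2) < r1" for x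
  proof -
    assume "x < M"
    then have "x div m2 < m1" unfolding M_def by (simp add: less_mult_imp_div_less)
    then show ?thesis using g1 assms(4) unfolding f1_def by auto
  qed
  have cdiv: "c x div r2 = f1 (x div m2)" for x
    using f2b[of x] unfolding c_def by simp
  have cmod: "c x mod r2 = f2 (x mod m2)" for x
    using f2b[of x] unfolding c_def by simp
  have cb: "x < M \<Longrightarrow> c x < r1 * r2" for x
  proof -
    assume "x < M"
    then have "f1 (x div m2) + 1 \<le> r1" using f1b[of x] by simp
    then have "(f1 (x div m2) + 1) * r2 \<le> r1 * r2" by (rule mult_right_mono) simp
    then show ?thesis using f2b[of x] unfolding c_def by simp
  qed
  have "good_coloring k M (r1 * r2) c"
    unfolding good_coloring_def
  proof (intro conjI ballI allI impI)
    fix x assume "x \<in> {1..<M}" then show "c x < r1 * r2" using cb by auto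
  next
    fix j assume jr: "j < r1 * r2"
    define C where "C = c(0 := j)"
    show "\<not> has_nontrivial_mono_AP k M (c(0 := j))"
    proof
      assume "has_nontrivial_mono_AP k M (c(0 := j))"
      then obtain a d where a: "a < M" and d: "d < M" "d \<noteq> 0"
        and mono: "\<forall>i<k. C ((a + i * d) mod M) = C a"
        unfolding has_nontrivial_mono_AP_def C_def by blast
      have Cb: "C z < r1 * r2" if "z < M" for z
        using cb that jr unfolding C_def by auto
      have Cmod: "z mod m2 \<noteq> 0 \<Longrightarrow> C z mod r2 = c2 (z mod m2)" for z
        unfolding C_def using cmod[of z] unfolding f2_def by (cases "z = 0") auto
      have Cdiv: "z div m2 \<noteq> 0 \<Longrightarrow> C z div r2 = c1 (z div m2)" for z
        unfolding C_def using cdiv[of z] unfolding f1_def by (cases "z = 0") auto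
      show False
      proof (cases "d mod m2 = 0")
        case False
        define v where "v = C a mod r2"
        have vr: "v < r2" unfolding v_def using assms(5) by simp
        have key: "(c2(0 := v)) (z mod m2) = v" if "C z mod r2 = v" for z
          using Cmod[of z] that by (cases "z mod m2 = 0") auto
        have "has_nontrivial_mono_AP k m2 (c2(0 := v))"
          unfolding has_nontrivial_mono_AP_def
        proof (intro exI conjI allI impI)
          show "a mod m2 < m2" "d mod m2 < m2" using m2p by auto
          show "d mod m2 \<noteq> 0" by fact
          fix i assume i: "i < k"
          have "(a mod m2 + i * (d mod m2)) mod m2 = (a + i * d) mod m2"
            by (metis mod_add_cong mod_mod_trivial mod_mult_right_eq)
          also have "\<dots> = (a + i * d) mod M mod m2"
            using mod_prod_split[OF m2p] unfolding M_def by simp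
          finally have e: "(a mod m2 + i * (d mod m2)) mod m2 = (a + i * d) mod M mod m2" .
          have "(c2(0 := v)) ((a + i * d) mod M mod m2) = v"
            by (rule key) (use mono i v_def in auto)
          moreover have "(c2(0 := v)) (a mod m2) = v" by (rule key) (simp add: v_def)
          ultimately show "(c2(0 := v)) ((a mod m2 + i * (d mod m2)) mod m2) = (c2(0 := v)) (a mod m2)"
            using e by simp
        qed
        then show False using n2 vr by blast
      next
        case True
        define e where "e = d div m2"
        have de: "d = m2 * e" unfolding e_def using True by (simp add: mod_eq_0_iff_dvd)
        have e1: "e < m1" using d(1) de m2p unfolding M_def by simp
        have e0: "e \<noteq> 0" using d(2) de by simp
        define u where "u = C a div r2"
        have ur: "u < r1" unfolding u_def using Cb[OF a] assms(5)
          by (simp add: less_mult_imp_div_less)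
        have key: "(c1(0 := u)) (z div m2) = u" if "C z div r2 = u" for z
          using Cdiv[of z] that by (cases "z div m2 = 0") auto
        have "has_nontrivial_mono_AP k m1 (c1(0 := u))"
          unfolding has_nontrivial_mono_AP_def
        proof (intro exI conjI allI impI)
          show "a div m2 < m1" using a unfolding M_def by (simp add: less_mult_imp_div_less)
          show "e < m1" "e \<noteq> 0" by fact+
          fix i assume i: "i < k"
          have "(a + i * d) div m2 = a div m2 + i * e"
            proof - have "a + i * d = a + (i * e) * m2" unfolding de by simp then show ?thesis using m2p by (simp only: div_mult_self1 [of m2] less_not_refl2 not_gr_zero) simp qed
          then have ee: "(a div m2 + i * e) mod m1 = (a + i * d) mod M div m2"
            using mod_prod_split[OF m2p] unfolding M_def by simp
          have "(c1(0 := u)) ((a + i * d) mod M div m2) = u"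
            by (rule key) (use mono i u_def in auto)
          moreover have "(c1(0 := u)) (a div m2) = u" by (rule key) (simp add: u_def)
          ultimately show "(c1(0 := u)) ((a div m2 + i * e) mod m1) = (c1(0 := u)) (a div m2)"
            using ee by simp
        qed
        then show False using n1 ur by blast
      qed
    qed
  qed
  then show ?thesis unfolding M_def by blast
qed

end
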